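(* Let $G=(V,E)$ be a directed graph whose edges are given on the external tape of a RATM-BIO in an arbitrary order. Then the worst-case external access trace complexity of the DFS-Random Access algorithm (described in the context) executed on a RATM-BIO is $O(|E|^2)$.
   Context: A RATM-BIO (random access Turing machine with blocking IO) has a main memory tape with its address tape and an external memory tape with its address tape; a main head with random access on the main tape (jumping in one step to the cell whose index is on the main address tape when entering a random access state) and an external head that moves only one cell at a time on the external tape. Transitions are main memory computation transitions (main head moves, external head halts), external memory access transitions (external head moves one step, main head halts), and read/write transitions: on entering a read (write) state an external address is written, the main head halts and the external head moves step by step to the designated external cell; when reached, the content of that cell replaces (is replaced by) the content of the main memory cell under the main head, and main memory computation resumes. The external access trace complexity is the total number of moves of the external head. Semi-external setting: main memory has size $O(|V|)$; it holds an array $free[\cdot]$ indexed by vertices and a stack. DFS-Random Access algorithm: set $free[u]=1$ for all vertices $u$; for each vertex $u$: push $u$ on an empty stack; while the stack is nonempty, pop $v$; if $free[v]=1$, set $free[v]=0$ and, for each neighbor $w$ of $v$ (each edge $(v,w)$ being read individually from the external tape), if $free[w]=1$ push $w$. *)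

theory Defs
  imports Main
begin

text \<open>
  Model of the DFS-Random Access algorithm on a RATM-BIO, keeping track only of
  the quantity relevant for the external access trace complexity: the position
  of the external head and the total number of its moves.

  Vertices are the naturals 0..n-1; the main-memory array free is a bool list of
  length n (free!v = True means free[v] = 1).  The external tape holds the edge
  list es, one edge per cell, cell i containing es!i, in arbitrary order.  The
  external head starts on cell 0.  Reading cell i moves the external head step
  by step from its current cell p to cell i, i.e. |p - i| moves.

  ord v is the list of external addresses (cells) of the edges (v,w) leaving v,
  in the order in which the algorithm reads them.
\<close>

definition head_dist :: "nat \<Rightarrow> nat \<Rightarrow> nat" where
  "head_dist p i = (if p \<le> i then i - p else p - i)"

text \<open>Read the edges at the given addresses, starting with the head at pos.
  Returns (final head position, number of head moves, targets read in order).\<close>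
fun read_edges :: "(nat \<times> nat) list \<Rightarrow> nat list \<Rightarrow> nat \<Rightarrow> nat \<times> nat \<times> nat list" where
  "read_edges es [] pos = (pos, 0, [])"
| "read_edges es (i # is) pos =
     (case read_edges es is i of (p', c, ws) \<Rightarrow> (p', head_dist pos i + c, snd (es ! i) # ws))"

text \<open>The stack loop. The stack is a list with its top at the head.
  Arguments: tape, read orders, free array, stack, head position, accumulated cost.\<close>
function dfs_loop :: "(nat \<times> nat) list \<Rightarrow> (nat \<Rightarrow> nat list) \<Rightarrow> bool list \<Rightarrow> nat list
    \<Rightarrow> nat \<Rightarrow> nat \<Rightarrow> bool list \<times> nat \<times> nat" where
  "dfs_loop es ord fr [] pos cost = (fr, pos, cost)"
| "dfs_loop es ord fr (v # st) pos cost =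
     (if v < length fr \<and> fr ! v then
        (let fr' = fr[v := False] in
         case read_edges es (ord v) pos of (pos', c, ws) \<Rightarrow>
           dfs_loop es ord fr'
             (rev (filter (\<lambda>w. w < length fr' \<and> fr' ! w) ws) @ st) pos' (cost + c))
      else dfs_loop es ord fr st pos cost)"
  by pat_completeness auto

lemma count_list_update_False:
  assumes "v < length fr" "fr ! v"
  shows "count_list (fr[v := False]) True < count_list fr True"
  using assms
proof (induction fr arbitrary: v)
  case Nil then show ?case by simp
next
  case (Cons a fr)
  then show ?case by (cases v) auto
qed

termination
  apply (relation "measures [\<lambda>(es, ord, fr, st, pos, cost). count_list fr True,
                             \<lambda>(es, ord, fr, st, pos, cost). length st]")
    apply (auto simp: count_list_update_False)
  done

fun dfs_outer :: "(nat \<times> nat) list \<Rightarrow> (nat \<Rightarrow> nat list) \<Rightarrow> bool list \<Rightarrow> nat list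
    \<Rightarrow> nat \<Rightarrow> nat \<Rightarrow> nat" where
  "dfs_outer es ord fr [] pos cost = cost"
| "dfs_outer es ord fr (u # us) pos cost =
     (case dfs_loop es ord fr [u] pos cost of (fr', pos', cost') \<Rightarrow>
        dfs_outer es ord fr' us pos' cost')"

definition dfs_ra_trace :: "nat \<Rightarrow> (nat \<times> nat) list \<Rightarrow> (nat \<Rightarrow> nat list) \<Rightarrow> nat" where
  "dfs_ra_trace n es ord = dfs_outer es ord (replicate n True) [0..<n] 0 0"

end

theory Submission
  imports Defs
begin

definition PP :: "(nat \<Rightarrow> nat list) \<Rightarrow> bool list \<Rightarrow> nat" where
  "PP ord fr = (\<Sum>v\<in>{v. v < length fr \<and> fr ! v}. length (ord v))"

lemma hd_le: "pos \<le> m \<Longrightarrow> i < m \<Longrightarrow> head_dist pos i \<le> m"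
  by (auto simp: head_dist_def)

lemma read_le:
  "read_edges es xs pos = (p', c, ws) \<Longrightarrow> pos \<le> m \<Longrightarrow> (\<forall>i\<in>set xs. i < m)
   \<Longrightarrow> c \<le> m * length xs \<and> p' \<le> m"
proof (induction xs arbitrary: pos p' c ws)
  case Nil then show ?case by simp
next
  case (Cons i xs)
  obtain p1 c1 ws1 where r: "read_edges es xs i = (p1, c1, ws1)" by (metis prod_cases3)
  have "c1 \<le> m * length xs \<and> p1 \<le> m" using Cons r by auto
  moreover have "head_dist pos i \<le> m" using Cons by (auto intro: hd_le)
  ultimately show ?case using Cons.prems r by auto
qed

lemma PP_upd:
  assumes "v < length fr" "fr ! v"
  shows "PP ord fr = PP ord (fr[v := False]) + length (ord v)"
proof -
  have e: "{w. w < length fr \<and> fr ! w} = insert v {w. w < length (fr[v := False]) \<and> fr[v := False] ! w}"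
    using assms by (auto simp: nth_list_update split: if_splits)
  have "v \<notin> {w. w < length (fr[v := False]) \<and> fr[v := False] ! w}" by simp
  then show ?thesis unfolding PP_def e by (simp add: sum.insert)
qed

lemma loop_le:
  "dfs_loop es ord fr st pos cost = (fr', pos', cost') \<Longrightarrow> pos \<le> m \<Longrightarrow>
   (\<forall>v<length fr. \<forall>i\<in>set (ord v). i < m) \<Longrightarrow>
   cost' + m * PP ord fr' \<le> cost + m * PP ord fr \<and> pos' \<le> m \<and> length fr' = length fr"
proof (induction es ord fr st pos cost arbitrary: fr' pos' cost' rule: dfs_loop.induct)
  case (1 es ord fr pos cost)
  then show ?case by simp
next
  case (2 es ord fr v st pos cost)
  show ?case
  proof (cases "v < length fr \<and> fr ! v")
    case True
    obtain p1 c1 ws1 where r: "read_edges es (ord v) pos = (p1, c1, ws1)" by (metis prod_cases3)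
    have rl: "c1 \<le> m * length (ord v) \<and> p1 \<le> m" using read_le[OF r] 2 True by auto
    define fr1 where "fr1 = fr[v := False]"
    have call: "dfs_loop es ord fr1 (rev (filter (\<lambda>w. w < length fr1 \<and> fr1 ! w) ws1) @ st) p1 (cost + c1)
       = (fr', pos', cost')" using 2(3) True r by (simp add: fr1_def Let_def)
    have ih: "cost' + m * PP ord fr' \<le> cost + c1 + m * PP ord fr1 \<and> pos' \<le> m \<and> length fr' = length fr1"
    proof (rule 2(1)[OF True fr1_def r[symmetric] refl call])
      show "p1 \<le> m" using rl by simp
      show "\<forall>v<length fr1. \<forall>i\<in>set (ord v). i < m" using 2(5) by (simp add: fr1_def)
    qed
    have "PP ord fr = PP ord fr1 + length (ord v)" using PP_upd True fr1_def by blast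
    then show ?thesis using ih rl by (simp add: fr1_def algebra_simps)
  next
    case False
    have "dfs_loop es ord fr st pos cost = (fr', pos', cost')" using 2(3) False by simp
    then show ?thesis by (rule 2(2)[OF False _ 2(4) 2(5)])
  qed
qed

lemma outer_le:
  "pos \<le> m \<Longrightarrow> (\<forall>v<length fr. \<forall>i\<in>set (ord v). i < m) \<Longrightarrow>
   dfs_outer es ord fr us pos cost \<le> cost + m * PP ord fr"
proof (induction us arbitrary: fr pos cost)
  case Nil then show ?case by simp
next
  case (Cons u us)
  obtain f1 p1 c1 where r: "dfs_loop es ord fr [u] pos cost = (f1, p1, c1)" by (metis prod_cases3)
  have l: "c1 + m * PP ord f1 \<le> cost + m * PP ord fr \<and> p1 \<le> m \<and> length f1 = length fr"
    using loop_le[OF r] Cons.prems by blast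
  have "dfs_outer es ord f1 us p1 c1 \<le> c1 + m * PP ord f1"
    using Cons.IH[of p1 f1 c1] l Cons.prems by auto
  then show ?case using r l by simp
qed

theorem theorem8:
  "\<exists>c::nat. \<forall>(n::nat) (es::(nat \<times> nat) list) (ord::nat \<Rightarrow> nat list).
     distinct es \<and> set es \<subseteq> {0..<n} \<times> {0..<n} \<and>
     (\<forall>v<n. distinct (ord v) \<and> set (ord v) = {i. i < length es \<and> fst (es ! i) = v})
     \<longrightarrow> dfs_ra_trace n es ord \<le> c * (length es)\<^sup>2"
proof (intro exI[of _ 1] allI impI)
  fix n es and ord :: "nat \<Rightarrow> nat list"
  assume A: "distinct es \<and> set es \<subseteq> {0..<n} \<times> {0..<n} \<and>
     (\<forall>v<n. distinct (ord v) \<and> set (ord v) = {i. i < length es \<and> fst (es ! i) = v})"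
  let ?m = "length es"
  have b: "\<forall>v<length (replicate n True). \<forall>i\<in>set (ord v). i < ?m" using A by auto
  have t: "dfs_ra_trace n es ord \<le> 0 + ?m * PP ord (replicate n True)"
    unfolding dfs_ra_trace_def using outer_le[OF _ b] by blast
  have "PP ord (replicate n True) = (\<Sum>v<n. length (ord v))"
    unfolding PP_def by (rule sum.cong) auto
  also have "\<dots> = (\<Sum>v<n. card (set (ord v)))"
    by (rule sum.cong) (use A in \<open>auto simp: distinct_card[symmetric]\<close>)
  also have "\<dots> = card (\<Union>v<n. set (ord v))"
    by (rule card_UN_disjoint[symmetric]) (use A in auto)
  also have "\<dots> \<le> card {..<?m}"
    by (rule card_mono) (use A in auto)
  finally have "PP ord (replicate n True) \<le> ?m" by simp
  then have "?m * PP ord (replicate n True) \<le> ?m * ?m" by (rule mult_le_mono2)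
  then show "dfs_ra_trace n es ord \<le> 1 * ?m\<^sup>2" using t by (metis le_trans power2_eq_square mult_1 add_0)
qed

end
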